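(* Let $f=u+iv$ be polar-analytic on an open neighbourhood $\mathcal D\subset\mathbb H$ of $(r_0,\theta_0)$, with $(D_{\rm pol}f)(r_0,\theta_0)\neq0$. For $j=1,2$ let $\gamma_j$ be a $C^1$ curve in $\mathcal D$ with $\gamma_j(0)=(r_0,\theta_0)$ and tangent vector $\gamma_j'(0)$ a positive multiple of $(\cos\phi_j,\sin\phi_j)$, where $\phi_j\in\,]-\pi/2,\pi/2]$; let $\alpha\in[0,\pi]$ be the angle between these tangent vectors, so $\cos\alpha=\cos(\phi_2-\phi_1)$. Then the curves $f\circ\gamma_1$ and $f\circ\gamma_2$ (viewed in $\mathbb R^2\cong\mathbb C$) have nonzero tangent vectors at $t=0$, and the angle $\beta\in[0,\pi]$ between them satisfies $$\cos\beta=\frac{c_1c_2+r_0^2s_1s_2}{\sqrt{c_1^2+r_0^2s_1^2}\,\sqrt{c_2^2+r_0^2s_2^2}},\qquad c_j=\cos\phi_j,\ s_j=\sin\phi_j.$$ In particular $\beta$ depends only on $r_0,\phi_1,\phi_2$ and not on $f$ or $\theta_0$, and $\beta=\alpha$ when $r_0=1$.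
   Context: $\mathbb H:=\{(r,\theta): r>0,\ \theta\in\mathbb R\}$. A function $f:\mathcal D\to\mathbb C$ on an open set $\mathcal D\subset\mathbb H$ is called polar-analytic on $\mathcal D$ if for every $(r_0,\theta_0)\in\mathcal D$ the limit $$(D_{\rm pol}f)(r_0,\theta_0):=\lim_{(r,\theta)\to(r_0,\theta_0)}\frac{f(r,\theta)-f(r_0,\theta_0)}{re^{i\theta}-r_0e^{i\theta_0}}$$ exists (with $(r,\theta)\in\mathcal D$, $re^{i\theta}\neq r_0e^{i\theta_0}$), independently of how $(r,\theta)$ approaches $(r_0,\theta_0)$ within $\mathcal D$. The angle between two nonzero vectors $x,y\in\mathbb R^2$ is the unique $\beta\in[0,\pi]$ with $\cos\beta=\langle x,y\rangle/(\|x\|_2\|y\|_2)$. *)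

theory Defs
  imports "HOL-Analysis.Analysis"
begin

definition Hpol :: "(real \<times> real) set" where
  "Hpol = {p. fst p > 0}"

definition pexp :: "real \<times> real \<Rightarrow> complex" where
  "pexp p = complex_of_real (fst p) * exp (\<i> * complex_of_real (snd p))"

definition pol_filter :: "(real \<times> real) set \<Rightarrow> real \<times> real \<Rightarrow> (real \<times> real) filter" where
  "pol_filter D p = at p within {q \<in> D. pexp q \<noteq> pexp p}"

definition pol_quot :: "(real \<times> real \<Rightarrow> complex) \<Rightarrow> real \<times> real \<Rightarrow> real \<times> real \<Rightarrow> complex" where
  "pol_quot f p q = (f q - f p) / (pexp q - pexp p)"

definition polar_analytic_on :: "(real \<times> real \<Rightarrow> complex) \<Rightarrow> (real \<times> real) set \<Rightarrow> bool" where
  "polar_analytic_on f D \<longleftrightarrow> (\<forall>p\<in>D. \<exists>l. (pol_quot f p \<longlongrightarrow> l) (pol_filter D p))"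

definition D_pol :: "(real \<times> real \<Rightarrow> complex) \<Rightarrow> (real \<times> real) set \<Rightarrow> real \<times> real \<Rightarrow> complex" where
  "D_pol f D p = Lim (pol_filter D p) (pol_quot f p)"

definition vec_angle :: "'a::real_inner \<Rightarrow> 'a \<Rightarrow> real" where
  "vec_angle x y = arccos (inner x y / (norm x * norm y))"

end

theory Submission
  imports Defs
begin

lemma hvd_quot:
  fixes F :: "real \<Rightarrow> 'a::real_normed_vector"
  shows "(F has_vector_derivative F') (at x) \<longleftrightarrow> ((\<lambda>t. (F t - F x) /\<^sub>R (t - x)) \<longlongrightarrow> F') (at x)"
proof -
  have bl: "bounded_linear (\<lambda>t::real. t *\<^sub>R F')" by (rule bounded_linear_scaleR_left)
  have ev: "\<forall>\<^sub>F y in at x. norm (F y - F x - (y - x) *\<^sub>R F') / norm (y - x) = norm ((F y - F x) /\<^sub>R (y - x) - F')"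
  proof (rule eventually_mono[OF eventually_neq_at_within[of x x UNIV]])
    fix y assume "y \<noteq> x"
    hence "F y - F x - (y - x) *\<^sub>R F' = (y - x) *\<^sub>R ((F y - F x) /\<^sub>R (y - x) - F')"
      by (simp add: scaleR_diff_right)
    thus "norm (F y - F x - (y - x) *\<^sub>R F') / norm (y - x) = norm ((F y - F x) /\<^sub>R (y - x) - F')"
      using \<open>y \<noteq> x\<close> by simp
  qed
  have "(F has_vector_derivative F') (at x) \<longleftrightarrow> ((\<lambda>y. norm ((F y - F x) /\<^sub>R (y - x) - F')) \<longlongrightarrow> 0) (at x)"
    unfolding has_vector_derivative_def has_derivative_iff_norm using bl tendsto_cong[OF ev] by simp
  also have "\<dots> \<longleftrightarrow> ((\<lambda>t. (F t - F x) /\<^sub>R (t - x)) \<longlongrightarrow> F') (at x)"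
    by (simp add: tendsto_norm_zero_iff LIM_zero_iff)
  finally show ?thesis .
qed

lemma pexp_inj:
  assumes "fst q > 0" "fst p > 0" "\<bar>snd q - snd p\<bar> < 2*pi" "pexp q = pexp p"
  shows "q = p"
proof -
  have nq: "norm (pexp q) = fst q" "norm (pexp p) = fst p"
    using assms(1,2) by (simp_all add: pexp_def norm_mult)
  hence r: "fst q = fst p" using assms(4) by simp
  hence "exp (\<i> * complex_of_real (snd q)) = exp (\<i> * complex_of_real (snd p))"
    using assms(4,2) by (simp add: pexp_def)
  then obtain n :: int where n: "\<i> * complex_of_real (snd q) = \<i> * complex_of_real (snd p) + (of_int (2 * n) * pi) * \<i>"
    using exp_eq by blast
  hence "Im (\<i> * complex_of_real (snd q)) = Im (\<i> * complex_of_real (snd p) + (of_int (2 * n) * pi) * \<i>)" by simp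
  hence "snd q = snd p + 2 * n * pi" by simp
  hence "\<bar>2 * n * pi\<bar> < 2 * pi" using assms(3) by simp
  hence "\<bar>n\<bar> < 1" by (simp add: abs_mult)
  hence "n = 0" by simp
  hence "snd q = snd p" using \<open>snd q = snd p + 2 * n * pi\<close> by simp
  thus ?thesis using r by (simp add: prod_eq_iff)
qed

lemma pexp_alt: "pexp q = complex_of_real (fst q * cos (snd q)) + \<i> * complex_of_real (fst q * sin (snd q))"
  unfolding pexp_def by (simp add: cis_conv_exp[symmetric] complex_eq_iff)

lemma curve_deriv:
  fixes f :: "real \<times> real \<Rightarrow> complex" and Q :: "real \<times> real \<Rightarrow> complex"
  assumes N: "open N" "p \<in> N"
    and fac: "\<And>q. q \<in> N \<Longrightarrow> f q - f p = Q q * (pexp q - pexp p)"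
    and cont: "isCont Q p"
    and gd: "(\<gamma> has_vector_derivative (k * c, k * s)) (at 0)" and g0: "\<gamma> 0 = p"
  shows "((f \<circ> \<gamma>) has_vector_derivative
     Q p * (complex_of_real (k * c * cos (snd p) - fst p * sin (snd p) * (k * s))
            + \<i> * complex_of_real (k * c * sin (snd p) + fst p * cos (snd p) * (k * s)))) (at 0)"
proof -
  define B where "B t = pexp (\<gamma> t)" for t
  define B' where "B' = complex_of_real (k * c * cos (snd p) - fst p * sin (snd p) * (k * s))
            + \<i> * complex_of_real (k * c * sin (snd p) + fst p * cos (snd p) * (k * s))"
  have dx: "((\<lambda>t. fst (\<gamma> t)) has_real_derivative k * c) (at 0)"
    using bounded_linear.has_vector_derivative[OF bounded_linear_fst gd]
    by (simp add: has_real_derivative_iff_has_vector_derivative)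
  have dy: "((\<lambda>t. snd (\<gamma> t)) has_real_derivative k * s) (at 0)"
    using bounded_linear.has_vector_derivative[OF bounded_linear_snd gd]
    by (simp add: has_real_derivative_iff_has_vector_derivative)
  have d1: "((\<lambda>t. fst (\<gamma> t) * cos (snd (\<gamma> t))) has_real_derivative
      k * c * cos (snd p) - fst p * sin (snd p) * (k * s)) (at 0)"
    using DERIV_mult[OF dx DERIV_fun_cos[OF dy]] g0 by (simp add: algebra_simps)
  have d2: "((\<lambda>t. fst (\<gamma> t) * sin (snd (\<gamma> t))) has_real_derivative
      k * c * sin (snd p) + fst p * cos (snd p) * (k * s)) (at 0)"
    using DERIV_mult[OF dx DERIV_fun_sin[OF dy]] g0 by (simp add: algebra_simps)
  have dB: "(B has_vector_derivative B') (at 0)"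
    unfolding B_def B'_def pexp_alt
    by (intro has_vector_derivative_add has_vector_derivative_mult_right has_vector_derivative_of_real d1 d2)
  hence qB: "((\<lambda>t. (B t - B 0) /\<^sub>R (t - 0)) \<longlongrightarrow> B') (at 0)"
    using dB by (simp only: hvd_quot)
  have gc: "(\<gamma> \<longlongrightarrow> p) (at 0)"
    using has_vector_derivative_continuous[OF gd] g0 by (simp add: continuous_at)
  have evN: "\<forall>\<^sub>F t in at 0. \<gamma> t \<in> N"
    using topological_tendstoD[OF gc N] .
  have qc: "((\<lambda>t. Q (\<gamma> t)) \<longlongrightarrow> Q p) (at 0)"
    using isCont_tendsto_compose[OF cont gc] .
  have "((\<lambda>t. Q (\<gamma> t) * ((B t - B 0) /\<^sub>R (t - 0))) \<longlongrightarrow> Q p * B') (at 0)"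
    by (intro tendsto_mult qc qB)
  moreover have "\<forall>\<^sub>F t in at 0. Q (\<gamma> t) * ((B t - B 0) /\<^sub>R (t - 0)) = ((f \<circ> \<gamma>) t - (f \<circ> \<gamma>) 0) /\<^sub>R (t - 0)"
    using evN
  proof eventually_elim
    case (elim t)
    have "(f \<circ> \<gamma>) t - (f \<circ> \<gamma>) 0 = Q (\<gamma> t) * (B t - B 0)"
      using fac[OF elim] g0 by (simp add: B_def)
    thus ?case by simp
  qed
  ultimately have "((\<lambda>t. ((f \<circ> \<gamma>) t - (f \<circ> \<gamma>) 0) /\<^sub>R (t - 0)) \<longlongrightarrow> Q p * B') (at 0)"
    by (rule tendsto_cong[THEN iffD1, rotated])
  thus ?thesis unfolding B'_def by (simp only: hvd_quot)
qed

lemma cos_vec_angle: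
  fixes x y :: "'a::real_inner"
  shows "cos (vec_angle x y) = inner x y / (norm x * norm y)"
proof -
  have "\<bar>inner x y / (norm x * norm y)\<bar> \<le> 1"
  proof (cases "norm x * norm y = 0")
    case False
    hence "norm x * norm y > 0" by (simp add: less_le)
    thus ?thesis using Cauchy_Schwarz_ineq2[of x y] by (simp add: abs_divide)
  qed auto
  thus ?thesis unfolding vec_angle_def by (rule cos_arccos_abs)
qed

lemma vec_angle_scaleR:
  fixes x y :: "'a::real_inner"
  assumes "a > 0" "b > 0"
  shows "vec_angle (a *\<^sub>R x) (b *\<^sub>R y) = vec_angle x y"
  unfolding vec_angle_def using assms by simp

lemma inner_cmult:
  fixes M a b :: complex
  shows "inner (M * a) (M * b) = (cmod M)\<^sup>2 * inner a b"
  unfolding inner_complex_def cmod_power2 by (simp add: algebra_simps power2_eq_square)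

lemma vec_angle_cmult:
  fixes M a b :: complex
  assumes "M \<noteq> 0"
  shows "vec_angle (M * a) (M * b) = vec_angle a b"
proof -
  have "inner (M * a) (M * b) / (norm (M * a) * norm (M * b)) = inner a b / (norm a * norm b)"
    using assms unfolding inner_cmult norm_mult by (simp add: power2_eq_square field_simps)
  thus ?thesis unfolding vec_angle_def by simp
qed

lemma complex_nz:
  assumes "r0 > 0" shows "Complex (cos \<phi>) (r0 * sin \<phi>) \<noteq> 0"
proof
  assume "Complex (cos \<phi>) (r0 * sin \<phi>) = 0"
  hence "cos \<phi> = 0" "sin \<phi> = 0" using assms by (auto simp: complex_eq_iff)
  thus False using sin_cos_squared_add[of \<phi>] by simp
qed

lemma curve_full:
  fixes f :: "real \<times> real \<Rightarrow> complex" and Q :: "real \<times> real \<Rightarrow> complex"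
  assumes N: "open N" "(r0, \<theta>0) \<in> N"
    and fac: "\<And>q. q \<in> N \<Longrightarrow> f q - f (r0, \<theta>0) = Q q * (pexp q - pexp (r0, \<theta>0))"
    and cont: "isCont Q (r0, \<theta>0)"
    and I: "a < 0" "0 < b" and C1: "\<gamma> C1_differentiable_on {a<..<b}"
    and g0: "\<gamma> 0 = (r0, \<theta>0)"
    and tan: "\<exists>k>0. vector_derivative \<gamma> (at 0) = k *\<^sub>R (cos \<phi>, sin \<phi>)"
  shows "\<exists>k>0. vector_derivative \<gamma> (at 0) = k *\<^sub>R (cos \<phi>, sin \<phi>) \<and>
     ((f \<circ> \<gamma>) has_vector_derivative
        (Q (r0, \<theta>0) * exp (\<i> * complex_of_real \<theta>0)) * (complex_of_real k * Complex (cos \<phi>) (r0 * sin \<phi>))) (at 0)"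
proof -
  obtain k where k: "k > 0" "vector_derivative \<gamma> (at 0) = k *\<^sub>R (cos \<phi>, sin \<phi>)" using tan by blast
  have "\<gamma> differentiable (at 0)" using C1 I unfolding C1_differentiable_on_eq by auto
  hence "(\<gamma> has_vector_derivative (k * cos \<phi>, k * sin \<phi>)) (at 0)"
    using k(2) by (simp add: vector_derivative_works)
  from curve_deriv[OF N fac cont this g0]
  have h: "((f \<circ> \<gamma>) has_vector_derivative
     Q (r0, \<theta>0) * (complex_of_real (k * cos \<phi> * cos \<theta>0 - r0 * sin \<theta>0 * (k * sin \<phi>))
            + \<i> * complex_of_real (k * cos \<phi> * sin \<theta>0 + r0 * cos \<theta>0 * (k * sin \<phi>)))) (at 0)"
    by simp
  have e: "complex_of_real (k * cos \<phi> * cos \<theta>0 - r0 * sin \<theta>0 * (k * sin \<phi>))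
            + \<i> * complex_of_real (k * cos \<phi> * sin \<theta>0 + r0 * cos \<theta>0 * (k * sin \<phi>))
         = exp (\<i> * complex_of_real \<theta>0) * (complex_of_real k * Complex (cos \<phi>) (r0 * sin \<phi>))"
    by (simp add: cis_conv_exp[symmetric] complex_eq_iff algebra_simps)
  show ?thesis using k h unfolding e by (auto simp: mult.assoc)
qed

theorem proposition4:
  fixes f :: "real \<times> real \<Rightarrow> complex"
    and D :: "(real \<times> real) set"
    and r0 \<theta>0 \<phi>1 \<phi>2 a1 b1 a2 b2 :: real
    and \<gamma>1 \<gamma>2 :: "real \<Rightarrow> real \<times> real"
  assumes D_open: "open D" and D_H: "D \<subseteq> Hpol" and p0: "(r0, \<theta>0) \<in> D"
    and f_pa: "polar_analytic_on f D"
    and Dpol_nz: "D_pol f D (r0, \<theta>0) \<noteq> 0"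
    and I1: "a1 < 0" "0 < b1" and I2: "a2 < 0" "0 < b2"
    and C1_1: "\<gamma>1 C1_differentiable_on {a1<..<b1}" and in1: "\<gamma>1 ` {a1<..<b1} \<subseteq> D"
    and C1_2: "\<gamma>2 C1_differentiable_on {a2<..<b2}" and in2: "\<gamma>2 ` {a2<..<b2} \<subseteq> D"
    and start1: "\<gamma>1 0 = (r0, \<theta>0)" and start2: "\<gamma>2 0 = (r0, \<theta>0)"
    and phi1: "-pi/2 < \<phi>1" "\<phi>1 \<le> pi/2" and phi2: "-pi/2 < \<phi>2" "\<phi>2 \<le> pi/2"
    and tan1: "\<exists>k>0. vector_derivative \<gamma>1 (at 0) = k *\<^sub>R (cos \<phi>1, sin \<phi>1)"
    and tan2: "\<exists>k>0. vector_derivative \<gamma>2 (at 0) = k *\<^sub>R (cos \<phi>2, sin \<phi>2)"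
  shows "(f \<circ> \<gamma>1) differentiable (at 0) \<and> (f \<circ> \<gamma>2) differentiable (at 0)
    \<and> vector_derivative (f \<circ> \<gamma>1) (at 0) \<noteq> 0 \<and> vector_derivative (f \<circ> \<gamma>2) (at 0) \<noteq> 0
    \<and> cos (vec_angle (vector_derivative (f \<circ> \<gamma>1) (at 0)) (vector_derivative (f \<circ> \<gamma>2) (at 0)))
        = (cos \<phi>1 * cos \<phi>2 + r0\<^sup>2 * sin \<phi>1 * sin \<phi>2)
          / (sqrt ((cos \<phi>1)\<^sup>2 + r0\<^sup>2 * (sin \<phi>1)\<^sup>2) * sqrt ((cos \<phi>2)\<^sup>2 + r0\<^sup>2 * (sin \<phi>2)\<^sup>2))
    \<and> (r0 = 1 \<longrightarrow>
        vec_angle (vector_derivative (f \<circ> \<gamma>1) (at 0)) (vector_derivative (f \<circ> \<gamma>2) (at 0))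
        = vec_angle (vector_derivative \<gamma>1 (at 0)) (vector_derivative \<gamma>2 (at 0)))"
  proof -
  define p where "p = (r0, \<theta>0)"
  have r0pos: "r0 > 0" using D_H p0 by (auto simp: Hpol_def)
  obtain l where lim: "(pol_quot f p \<longlongrightarrow> l) (pol_filter D p)"
    using f_pa p0 unfolding polar_analytic_on_def p_def by blast
  define N where "N = D \<inter> ball p (2*pi)"
  have Nopen: "open N" using D_open by (simp add: N_def open_Int)
  have pN: "p \<in> N" using p0 by (simp add: N_def p_def)
  have ND: "N \<subseteq> D" by (auto simp: N_def)
  have injN: "q = p" if "q \<in> N" "pexp q = pexp p" for q
  proof (rule pexp_inj)
    show "fst q > 0" using that(1) ND D_H by (auto simp: Hpol_def)
    show "fst p > 0" using r0pos by (simp add: p_def)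
    have "dist (snd q) (snd p) \<le> dist q p" by (rule dist_snd_le)
    also have "\<dots> < 2*pi" using that(1) by (simp add: N_def dist_commute)
    finally show "\<bar>snd q - snd p\<bar> < 2*pi" by (simp add: dist_real_def)
  qed (rule that(2))
  have filt: "pol_filter D p = at p"
  proof -
    have "{q \<in> D. pexp q \<noteq> pexp p} \<inter> N - {p} = UNIV \<inter> N - {p}"
      using injN ND by auto
    from at_within_nhd[OF pN Nopen this] show ?thesis by (simp add: pol_filter_def)
  qed
  have lim': "(pol_quot f p \<longlongrightarrow> l) (at p)" using lim filt by simp
  have Dl: "D_pol f D p = l"
    unfolding D_pol_def filt using tendsto_Lim[OF at_neq_bot lim'] .
  have lnz: "l \<noteq> 0" using Dpol_nz Dl by (simp add: p_def)
  define Q where "Q q = (if pexp q = pexp p then l else pol_quot f p q)" for q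
  have Qp: "Q p = l" by (simp add: Q_def)
  have evQ: "\<forall>\<^sub>F q in at p. pol_quot f p q = Q q"
  proof -
    have "\<forall>\<^sub>F q in at p. q \<in> N" using Nopen pN eventually_at_topological by blast
    moreover have "\<forall>\<^sub>F q in at p. q \<noteq> p" by (rule eventually_neq_at_within)
    ultimately show ?thesis
    proof eventually_elim
      case (elim q) thus ?case using injN[of q] by (auto simp: Q_def)
    qed
  qed
  have cont: "isCont Q p"
    unfolding isCont_def Qp using tendsto_cong[OF evQ] lim' by simp
  have fac: "f q - f p = Q q * (pexp q - pexp p)" if "q \<in> N" for q
  proof (cases "pexp q = pexp p")
    case True thus ?thesis using injN[OF that] by simp
  next
    case False thus ?thesis by (simp add: Q_def pol_quot_def)
  qed
  define M where "M = l * exp (\<i> * complex_of_real \<theta>0)"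
  have Mnz: "M \<noteq> 0" using lnz by (simp add: M_def)
  define z1 where "z1 = Complex (cos \<phi>1) (r0 * sin \<phi>1)"
  define z2 where "z2 = Complex (cos \<phi>2) (r0 * sin \<phi>2)"
  obtain k1 where k1: "k1 > 0" "vector_derivative \<gamma>1 (at 0) = k1 *\<^sub>R (cos \<phi>1, sin \<phi>1)"
    "((f \<circ> \<gamma>1) has_vector_derivative M * (complex_of_real k1 * z1)) (at 0)"
    using curve_full[OF Nopen pN[unfolded p_def] fac[unfolded p_def] cont[unfolded p_def] I1 C1_1 start1 tan1]
    unfolding M_def z1_def Qp[unfolded p_def] by blast
  obtain k2 where k2: "k2 > 0" "vector_derivative \<gamma>2 (at 0) = k2 *\<^sub>R (cos \<phi>2, sin \<phi>2)"
    "((f \<circ> \<gamma>2) has_vector_derivative M * (complex_of_real k2 * z2)) (at 0)"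
    using curve_full[OF Nopen pN[unfolded p_def] fac[unfolded p_def] cont[unfolded p_def] I2 C1_2 start2 tan2]
    unfolding M_def z2_def Qp[unfolded p_def] by blast
  have v1: "vector_derivative (f \<circ> \<gamma>1) (at 0) = M * (complex_of_real k1 * z1)"
    using k1(3) by (rule vector_derivative_at)
  have v2: "vector_derivative (f \<circ> \<gamma>2) (at 0) = M * (complex_of_real k2 * z2)"
    using k2(3) by (rule vector_derivative_at)
  have z1nz: "z1 \<noteq> 0" using complex_nz[OF r0pos] by (simp add: z1_def)
  have z2nz: "z2 \<noteq> 0" using complex_nz[OF r0pos] by (simp add: z2_def)
  have ang: "vec_angle (vector_derivative (f \<circ> \<gamma>1) (at 0)) (vector_derivative (f \<circ> \<gamma>2) (at 0))
      = vec_angle z1 z2"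
    unfolding v1 v2 vec_angle_cmult[OF Mnz] using k1(1) k2(1)
    by (simp add: scaleR_conv_of_real[symmetric] vec_angle_scaleR)
  have cosz: "cos (vec_angle z1 z2) = (cos \<phi>1 * cos \<phi>2 + r0\<^sup>2 * sin \<phi>1 * sin \<phi>2)
          / (sqrt ((cos \<phi>1)\<^sup>2 + r0\<^sup>2 * (sin \<phi>1)\<^sup>2) * sqrt ((cos \<phi>2)\<^sup>2 + r0\<^sup>2 * (sin \<phi>2)\<^sup>2))"
    unfolding cos_vec_angle by (simp add: z1_def z2_def inner_complex_def complex_norm power_mult_distrib power2_eq_square mult_ac)
  have r1: "vec_angle (vector_derivative \<gamma>1 (at 0)) (vector_derivative \<gamma>2 (at 0)) = vec_angle z1 z2"
    if "r0 = 1"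
    unfolding k1(2) k2(2) vec_angle_scaleR[OF k1(1) k2(1)] using that
    by (simp add: z1_def z2_def vec_angle_def inner_complex_def complex_norm norm_prod_def)
  show ?thesis
    using k1(3) k2(3) v1 v2 Mnz z1nz z2nz k1(1) k2(1) ang cosz r1
    by (auto intro: differentiableI_vector)
qed

end
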